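(* Let ${\sf SComp}$ be the non-symmetric suboperad of ${\sf T}\mathbb{N}_3$ generated by $00$, $01$ and $02$. Then the elements of ${\sf SComp}$ are exactly the words over the alphabet $\{0,1,2\}$ that begin with $0$. Moreover, the elements of ${\sf SComp}$ of arity $n$ are in bijection with the segmented compositions of the integer $n$. Finally, ${\sf SComp}$ is isomorphic to the non-symmetric operad generated by three generators ${\tt a},{\tt b},{\tt c}$ of arity two subject to the nine relations $${\tt a}\circ_1{\tt a}={\tt a}\circ_2{\tt a},\quad {\tt b}\circ_1{\tt a}={\tt a}\circ_2{\tt b},\quad {\tt b}\circ_1{\tt b}={\tt b}\circ_2{\tt a},$$ $${\tt c}\circ_1{\tt a}={\tt a}\circ_2{\tt c},\quad {\tt c}\circ_1{\tt c}={\tt c}\circ_2{\tt a},\quad {\tt b}\circ_1{\tt c}={\tt c}\circ_2{\tt c},$$ $${\tt c}\circ_1{\tt b}={\tt b}\circ_2{\tt b},\quad {\tt a}\circ_1{\tt b}={\tt b}\circ_2{\tt c},\quad {\tt a}\circ_1{\tt c}={\tt c}\circ_2{\tt b}.$$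
   Context: Let $\mathbb{N}_3=\mathbb{Z}/3\mathbb{Z}=\{0,1,2\}$ be the additive monoid of integers modulo $3$. ${\sf T}\mathbb{N}_3=\biguplus_{n\ge1}\mathbb{N}_3^n$, elements of arity $n$ being words $x=(x_1,\dots,x_n)$ of length $n$ over $\{0,1,2\}$ (written without separators, e.g. $02=(0,2)$), with partial compositions $x\circ_i y:=(x_1,\dots,x_{i-1},x_i+y_1,\dots,x_i+y_m,x_{i+1},\dots,x_n)$ (sums modulo $3$) for $x$ of arity $n$, $y$ of arity $m$, $1\le i\le n$; it is a non-symmetric set-operad with unit $(0)$. The non-symmetric suboperad generated by a set $S$ is the smallest subset containing $S$ and the unit $(0)$ and closed under all $\circ_i$. A segmented composition of $n$ is a finite nonempty sequence of compositions (finite sequences of positive integers) whose total sum of parts is $n$; equivalently, a row of $n$ cells where each of the $n-1$ gaps between consecutive cells is either empty, a part separator, or a segment separator. A non-symmetric operad generated by generators subject to relations means the quotient of the free non-symmetric set-operad on those generators by the smallest operad congruence containing the given relations. *)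

theory Defs
  imports Main
begin

text \<open>Words are nat lists with letters in {0,1,2}; arity = length.
  Partial composition x o_i y (1-based i), sums modulo 3.\<close>

definition wcomp :: "nat list \<Rightarrow> nat \<Rightarrow> nat list \<Rightarrow> nat list" where
  "wcomp x i y = take (i - 1) x @ map (\<lambda>b. (x ! (i - 1) + b) mod 3) y @ drop i x"

definition TN3 :: "nat list set" where
  "TN3 = {x. x \<noteq> [] \<and> set x \<subseteq> {0, 1, 2}}"

inductive_set SComp :: "nat list set" where
  unit: "[0] \<in> SComp"
| gen00: "[0, 0] \<in> SComp"
| gen01: "[0, 1] \<in> SComp"
| gen02: "[0, 2] \<in> SComp"
| comp: "x \<in> SComp \<Longrightarrow> y \<in> SComp \<Longrightarrow> 1 \<le> i \<Longrightarrow> i \<le> length x \<Longrightarrow> wcomp x i y \<in> SComp"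

definition segcomp :: "nat \<Rightarrow> nat list list set" where
  "segcomp n = {S. S \<noteq> [] \<and> (\<forall>c \<in> set S. c \<noteq> [] \<and> (\<forall>p \<in> set c. 0 < p))
                  \<and> sum_list (map sum_list S) = n}"

datatype gen = A | B | C

text \<open>Syntax trees: Leaf is the unit, Node g l r is g with l and r grafted.\<close>
datatype tree = Leaf | Node gen tree tree

fun arity :: "tree \<Rightarrow> nat" where
  "arity Leaf = 1"
| "arity (Node g l r) = arity l + arity r"

fun graft :: "tree \<Rightarrow> nat \<Rightarrow> tree \<Rightarrow> tree" where
  "graft Leaf i s = (if i = 1 then s else Leaf)"
| "graft (Node g l r) i s =
     (if i \<le> arity l then Node g (graft l i s) r
      else Node g l (graft r (i - arity l) s))"

definition gtree :: "gen \<Rightarrow> tree" where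
  "gtree g = Node g Leaf Leaf"

definition rels :: "(tree \<times> tree) set" where
  "rels = {
    (graft (gtree A) 1 (gtree A), graft (gtree A) 2 (gtree A)),
    (graft (gtree B) 1 (gtree A), graft (gtree A) 2 (gtree B)),
    (graft (gtree B) 1 (gtree B), graft (gtree B) 2 (gtree A)),
    (graft (gtree C) 1 (gtree A), graft (gtree A) 2 (gtree C)),
    (graft (gtree C) 1 (gtree C), graft (gtree C) 2 (gtree A)),
    (graft (gtree B) 1 (gtree C), graft (gtree C) 2 (gtree C)),
    (graft (gtree C) 1 (gtree B), graft (gtree B) 2 (gtree B)),
    (graft (gtree A) 1 (gtree B), graft (gtree B) 2 (gtree C)),
    (graft (gtree A) 1 (gtree C), graft (gtree C) 2 (gtree B)) }"

inductive opcong :: "tree \<Rightarrow> tree \<Rightarrow> bool" where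
  rel: "(s, t) \<in> rels \<Longrightarrow> opcong s t"
| refl: "opcong s s"
| sym: "opcong s t \<Longrightarrow> opcong t s"
| trans: "opcong s t \<Longrightarrow> opcong t u \<Longrightarrow> opcong s u"
| compL: "opcong s s' \<Longrightarrow> 1 \<le> i \<Longrightarrow> i \<le> arity s \<Longrightarrow> opcong (graft s i t) (graft s' i t)"
| compR: "opcong t t' \<Longrightarrow> 1 \<le> i \<Longrightarrow> i \<le> arity s \<Longrightarrow> opcong (graft s i t) (graft s i t')"

text \<open>An isomorphism between the quotient (free operad / opcong) and SComp is the same
  as a morphism phi from the free operad to SComp (preserving arity, unit and partial
  compositions) which is surjective onto SComp and whose kernel is exactly opcong.\<close>
definition presents_SComp :: "(tree \<Rightarrow> nat list) \<Rightarrow> bool" where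
  "presents_SComp phi \<longleftrightarrow>
     (\<forall>t. phi t \<in> SComp \<and> length (phi t) = arity t)
   \<and> phi Leaf = [0]
   \<and> (\<forall>s t i. 1 \<le> i \<and> i \<le> arity s \<longrightarrow> phi (graft s i t) = wcomp (phi s) i (phi t))
   \<and> SComp \<subseteq> range phi
   \<and> (\<forall>s t. phi s = phi t \<longleftrightarrow> opcong s t)"

end

theory Submission
  imports Defs
begin

lemma mod3_set: "(n::nat) mod 3 \<in> {0,1,2}"
  by (auto; presburger)

lemma SComp_sub: "x \<in> SComp \<Longrightarrow> x \<noteq> [] \<and> set x \<subseteq> {0,1,2} \<and> hd x = 0"
proof (induction rule: SComp.induct)
  case (comp x y i)
  have hx: "x \<noteq> [] \<and> hd x = 0" "y \<noteq> [] \<and> hd y = 0" using comp.IH by simp_all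
  have sx: "set x \<subseteq> {0,1,2}" using comp.IH by simp
  from hx(1) obtain xs where x: "x = 0 # xs" by (cases x) auto
  from hx(2) obtain ys where y: "y = 0 # ys" by (cases y) auto
  have s1: "set (take (i - 1) x) \<subseteq> {0,1,2}" using sx set_take_subset[of "i - 1" x] by (rule order_trans[rotated])
  have s2: "set (drop i x) \<subseteq> {0,1,2}" using sx set_drop_subset[of i x] by (rule order_trans[rotated])
  have s3: "set (map (\<lambda>b. (x ! (i - 1) + b) mod 3) y) \<subseteq> {0,1,2}" using mod3_set by auto
  have ne: "wcomp x i y \<noteq> []" unfolding wcomp_def using y by simp
  have hd: "hd (wcomp x i y) = 0"
  proof (cases "i = 1")
    case True then show ?thesis unfolding wcomp_def using x y by simp
  next
    case False
    have "1 \<le> i" using comp by simp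
    then obtain k where k: "i - 1 = Suc k" using False by (cases "i - 1") auto
    then have "take (i - 1) x = 0 # take k xs" using x by simp
    then show ?thesis unfolding wcomp_def by simp
  qed
  have "set (wcomp x i y) \<subseteq> {0,1,2}" unfolding wcomp_def set_append using s1 s2 s3
    by (intro Un_least)
  then show ?case using ne hd by blast
qed auto

lemma W_sub: "x \<noteq> [] \<Longrightarrow> set x \<subseteq> {0,1,2} \<Longrightarrow> hd x = 0 \<Longrightarrow> x \<in> SComp"
proof (induction x rule: rev_induct)
  case Nil then show ?case by simp
next
  case (snoc a xs)
  show ?case
  proof (cases "xs = []")
    case True then show ?thesis using snoc SComp.unit by simp
  next
    case False
    then have xsS: "xs \<in> SComp" using snoc by simp
    define b where "b = last xs"
    define c where "c = (a + 3 - b) mod 3"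
    have "last xs \<in> set xs" using False by simp
    then have bs: "b \<in> {0,1,2}" using snoc unfolding b_def by auto
    have as: "a \<in> {0,1,2}" using snoc by auto
    have "c \<in> {0,1,2}" using mod3_set[of "a + 3 - b"] unfolding c_def by simp
    then have cS: "[0, c] \<in> SComp" using SComp.gen00 SComp.gen01 SComp.gen02 by auto
    have "wcomp xs (length xs) [0, c] = butlast xs @ [b mod 3, (b + c) mod 3]"
      unfolding wcomp_def b_def using False
      by (simp add: last_conv_nth butlast_conv_take)
    also have "\<dots> = butlast xs @ [b, a]"
    proof -
      have "b mod 3 = b" "(b + c) mod 3 = a" using bs as unfolding c_def by auto
      then show ?thesis by simp
    qed
    also have "\<dots> = xs @ [a]" unfolding b_def
      by (subst append_butlast_last_id[OF False, symmetric]) simp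
    finally show ?thesis using SComp.comp[OF xsS cS, of "length xs"] False
      by (simp add: Suc_le_eq)
  qed
qed

lemma SComp_eq: "SComp = {x. x \<noteq> [] \<and> set x \<subseteq> {0, 1, 2} \<and> hd x = 0}"
  using SComp_sub W_sub by blast

fun enc :: "nat list \<Rightarrow> nat list list" where
  "enc [] = [[1]]"
| "enc (g # gs) = (let S = enc gs in
     if g = 0 then ((hd (hd S) + 1) # tl (hd S)) # tl S
     else if g = 1 then (1 # hd S) # tl S
     else [1] # S)"

definition valid :: "nat list list \<Rightarrow> bool" where
  "valid S \<longleftrightarrow> S \<noteq> [] \<and> (\<forall>c \<in> set S. c \<noteq> [] \<and> (\<forall>p \<in> set c. 0 < p))"

function dec :: "nat list list \<Rightarrow> nat list" where
  "dec [] = []"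
| "dec ([] # S) = []"
| "dec ((p # c) # S) = (if 1 < p then 0 # dec (((p - 1) # c) # S)
     else if c \<noteq> [] then 1 # dec (c # S)
     else if S \<noteq> [] then 2 # dec S else [])"
  by pat_completeness auto
termination
  by (relation "measure (\<lambda>S. sum_list (map sum_list S) + sum_list (map length S) + length S)") auto

lemma valid_cons_obtain:
  assumes "valid S"
  obtains p c S' where "S = (p # c) # S'" "0 < p"
  using assms unfolding valid_def
  by (cases S; cases "hd S") auto

lemma enc_valid: "valid (enc gs) \<and> sum_list (map sum_list (enc gs)) = Suc (length gs)"
proof (induction gs)
  case Nil then show ?case by (simp add: valid_def)
next
  case (Cons g gs)
  then obtain p c S' where S: "enc gs = (p # c) # S'" "0 < p" and v: "valid (enc gs)"
    and sm: "sum_list (map sum_list (enc gs)) = Suc (length gs)"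
    by (meson valid_cons_obtain)
  show ?case using S v sm by (auto simp: valid_def Let_def)
qed

lemma dec_enc: "set gs \<subseteq> {0,1,2} \<Longrightarrow> dec (enc gs) = gs"
proof (induction gs)
  case Nil then show ?case by simp
next
  case (Cons g gs)
  then have IH: "dec (enc gs) = gs" by simp
  obtain p c S' where S: "enc gs = (p # c) # S'" "0 < p"
    using enc_valid by (meson valid_cons_obtain)
  have "g \<in> {0,1,2}" using Cons by simp
  then show ?case using S IH by (auto simp: Let_def)
qed

lemma enc_dec: "valid S \<Longrightarrow> enc (dec S) = S \<and> set (dec S) \<subseteq> {0,1,2}
   \<and> Suc (length (dec S)) = sum_list (map sum_list S)"
proof (induction S rule: dec.induct)
  case 1 then show ?case by (simp add: valid_def)
next
  case (2 S) then show ?case by (simp add: valid_def)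
next
  case (3 p c S)
  have p0: "0 < p" using "3.prems" by (simp add: valid_def)
  show ?case
  proof (cases "1 < p")
    case True
    have v: "valid (((p - 1) # c) # S)" using "3.prems" True by (auto simp: valid_def)
    from "3.IH"(1)[OF True v] True show ?thesis by (simp add: Let_def)
  next
    case False
    then have p1: "p = 1" using p0 by simp
    show ?thesis
    proof (cases "c \<noteq> []")
      case True
      have v: "valid (c # S)" using "3.prems" True by (auto simp: valid_def)
      from "3.IH"(2)[OF False True v] True p1 show ?thesis by (simp add: Let_def)
    next
      case cF: False
      show ?thesis
      proof (cases "S \<noteq> []")
        case True
        have v: "valid S" using "3.prems" True by (auto simp: valid_def)
        from "3.IH"(3)[OF False cF True v] True cF p1 show ?thesis by (simp add: Let_def)
      next
        case False
        then show ?thesis using cF p1 by simp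
      qed
    qed
  qed
qed

lemma segcomp_valid: "segcomp n = {S. valid S \<and> sum_list (map sum_list S) = n}"
  unfolding segcomp_def valid_def by auto

lemma part2: "n \<ge> 1 \<Longrightarrow> \<exists>f. bij_betw f {x \<in> SComp. length x = n} (segcomp n)"
proof -
  assume n: "n \<ge> 1"
  let ?A = "{x \<in> SComp. length x = n}"
  have A: "?A = {x. x \<noteq> [] \<and> set x \<subseteq> {0,1,2} \<and> hd x = 0 \<and> length x = n}"
    using SComp_eq by auto
  have "bij_betw (\<lambda>x. enc (tl x)) ?A (segcomp n)"
  proof (rule bij_betw_byWitness[where f' = "\<lambda>S. 0 # dec S"])
    show "\<forall>a\<in>?A. 0 # dec (enc (tl a)) = a"
    proof
      fix a assume "a \<in> ?A"
      then have "a \<noteq> []" "set a \<subseteq> {0,1,2}" "hd a = 0" using A by auto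
      then show "0 # dec (enc (tl a)) = a"
        by (cases a) (auto simp: dec_enc)
    qed
    show "\<forall>S\<in>segcomp n. enc (tl (0 # dec S)) = S"
      using enc_dec segcomp_valid by auto
    show "(\<lambda>x. enc (tl x)) ` ?A \<subseteq> segcomp n"
    proof
      fix S assume "S \<in> (\<lambda>x. enc (tl x)) ` ?A"
      then obtain a where a: "a \<in> ?A" "S = enc (tl a)" by auto
      then have "a \<noteq> []" "length a = n" using A by auto
      then show "S \<in> segcomp n" using a enc_valid[of "tl a"] segcomp_valid by auto
    qed
    show "(\<lambda>S. 0 # dec S) ` segcomp n \<subseteq> ?A"
    proof
      fix x assume "x \<in> (\<lambda>S. 0 # dec S) ` segcomp n"
      then obtain S where S: "S \<in> segcomp n" "x = 0 # dec S" by auto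
      then show "x \<in> ?A" using enc_dec[of S] segcomp_valid A by auto
    qed
  qed
  then show ?thesis by blast
qed

fun gv :: "gen \<Rightarrow> nat" where
  "gv A = 0" | "gv B = 1" | "gv C = 2"

fun gofn :: "nat \<Rightarrow> gen" where
  "gofn 0 = A" | "gofn (Suc 0) = B" | "gofn _ = C"

fun gsub :: "gen \<Rightarrow> gen \<Rightarrow> gen" where
  "gsub A A = A" | "gsub A B = C" | "gsub A C = B"
| "gsub B A = B" | "gsub B B = A" | "gsub B C = C"
| "gsub C A = C" | "gsub C B = B" | "gsub C C = A"

fun phi :: "tree \<Rightarrow> nat list" where
  "phi Leaf = [0]"
| "phi (Node g l r) = phi l @ map (\<lambda>b. (gv g + b) mod 3) (phi r)"

lemma phi_W: "phi t \<noteq> [] \<and> set (phi t) \<subseteq> {0,1,2} \<and> hd (phi t) = 0 \<and> length (phi t) = arity t"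
proof (induction t)
  case (Node g l r)
  have "set (map (\<lambda>b. (gv g + b) mod 3) (phi r)) \<subseteq> {0,1,2}" using mod3_set by auto
  then show ?case using Node by auto
qed simp

lemma arity_pos: "1 \<le> arity t"
  by (induction t) auto

lemma wcomp_app1: "1 \<le> i \<Longrightarrow> i \<le> length x \<Longrightarrow> wcomp (x @ m) i y = wcomp x i y @ m"
  unfolding wcomp_def by (simp add: nth_append)

lemma wcomp_app2: "1 \<le> j \<Longrightarrow> wcomp (x @ m) (length x + j) y = x @ wcomp m j y"
  unfolding wcomp_def by (simp add: nth_append)

lemma wcomp_map: "1 \<le> i \<Longrightarrow> i \<le> length x \<Longrightarrow>
  map (\<lambda>b. (k + b) mod 3) (wcomp x i y) = wcomp (map (\<lambda>b. (k + b) mod 3) x) i y"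
  unfolding wcomp_def by (simp add: take_map drop_map mod_add_right_eq mod_add_left_eq add.assoc)

lemma wcomp_unit: "set y \<subseteq> {0,1,2} \<Longrightarrow> wcomp [0] 1 y = y"
  unfolding wcomp_def by simp (rule map_idI, auto)

lemma phi_graft: "1 \<le> i \<Longrightarrow> i \<le> arity s \<Longrightarrow> phi (graft s i t) = wcomp (phi s) i (phi t)"
proof (induction s arbitrary: i)
  case Leaf then show ?case using wcomp_unit phi_W by simp
next
  case (Node g l r)
  show ?case
  proof (cases "i \<le> arity l")
    case True
    then show ?thesis using Node phi_W[of l] by (simp add: wcomp_app1)
  next
    case False
    define j where "j = i - arity l"
    have ij: "i = length (phi l) + j" "1 \<le> j" "j \<le> arity r" using False Node.prems phi_W[of l]
      unfolding j_def by auto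
    have "phi (graft (Node g l r) i t) = phi l @ map (\<lambda>b. (gv g + b) mod 3) (wcomp (phi r) j (phi t))"
      using False Node.IH(2)[of j] ij unfolding j_def by simp
    also have "\<dots> = phi l @ wcomp (map (\<lambda>b. (gv g + b) mod 3) (phi r)) j (phi t)"
      using wcomp_map[of j "phi r"] ij phi_W[of r] by simp
    also have "\<dots> = wcomp (phi (Node g l r)) i (phi t)"
      using wcomp_app2 ij by simp
    finally show ?thesis .
  qed
qed

lemma phi_range: "x \<in> SComp \<Longrightarrow> x \<in> range phi"
proof (induction rule: SComp.induct)
  case unit then show ?case by (metis phi.simps(1) rangeI)
next
  case gen00 have "phi (gtree A) = [0,0]" by (simp add: gtree_def) then show ?case by (metis rangeI)
next
  case gen01 have "phi (gtree B) = [0,1]" by (simp add: gtree_def) then show ?case by (metis rangeI)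
next
  case gen02 have "phi (gtree C) = [0,2]" by (simp add: gtree_def) then show ?case by (metis rangeI)
next
  case (comp x y i)
  then obtain s t where "x = phi s" "y = phi t" by auto
  then have "wcomp x i y = phi (graft s i t)" using comp phi_graft phi_W by simp
  then show ?case by simp
qed

lemma opcong_phi: "opcong s t \<Longrightarrow> phi s = phi t"
proof (induction rule: opcong.induct)
  case (rel s t) then show ?case by (auto simp: rels_def gtree_def)
next
  case (compL s s' i t)
  have "i \<le> arity s'" using compL phi_W[of s] phi_W[of s'] by simp
  then show ?case using compL phi_graft by simp
next
  case (compR t t' i s)
  then show ?case using phi_graft by simp
qed auto

fun rcomb :: "gen list \<Rightarrow> tree" where
  "rcomb [] = Leaf"
| "rcomb (g # gs) = Node g Leaf (rcomb gs)"

lemma congL: "opcong l l' \<Longrightarrow> opcong (Node g l r) (Node g l' r)"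
  using opcong.compR[of l l' 1 "Node g Leaf r"] by simp

lemma congR: "opcong r r' \<Longrightarrow> opcong (Node g l r) (Node g l r')"
  using opcong.compR[of r r' "arity l + 1" "Node g l Leaf"] by simp

lemma rel_rot: "(Node x (Node y Leaf Leaf) Leaf, Node y Leaf (Node (gsub x y) Leaf Leaf)) \<in> rels"
  by (cases x; cases y) (simp_all add: rels_def gtree_def)

lemma rot: "opcong (Node x (Node y a b) c) (Node y a (Node (gsub x y) b c))"
proof -
  let ?z = "gsub x y"
  have h0: "opcong (Node x (Node y Leaf Leaf) Leaf) (Node y Leaf (Node ?z Leaf Leaf))"
    using rel_rot opcong.rel by blast
  have h1: "opcong (Node x (Node y Leaf Leaf) c) (Node y Leaf (Node ?z Leaf c))"
    using opcong.compL[OF h0, of 3 c] by (simp add: numeral_3_eq_3)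
  have h2: "opcong (Node x (Node y Leaf b) c) (Node y Leaf (Node ?z b c))"
    using opcong.compL[OF h1, of 2 b] arity_pos[of c] by (simp add: numeral_2_eq_2)
  have h3: "opcong (Node x (Node y a b) c) (Node y a (Node ?z b c))"
    using opcong.compL[OF h2, of 1 a] arity_pos[of c] arity_pos[of b] by simp
  then show ?thesis .
qed

lemma norm_node: "\<exists>gs. opcong (Node g (rcomb ls) (rcomb rs)) (rcomb gs)"
proof (induction ls arbitrary: g)
  case Nil
  have "opcong (Node g (rcomb []) (rcomb rs)) (rcomb (g # rs))" by (simp add: opcong.refl)
  then show ?case by blast
next
  case (Cons h ls)
  obtain gs where gs: "opcong (Node (gsub g h) (rcomb ls) (rcomb rs)) (rcomb gs)" using Cons by blast
  have "opcong (Node g (rcomb (h # ls)) (rcomb rs)) (Node h Leaf (Node (gsub g h) (rcomb ls) (rcomb rs)))"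
    using rot by simp
  moreover have "opcong (Node h Leaf (Node (gsub g h) (rcomb ls) (rcomb rs))) (rcomb (h # gs))"
    using congR[OF gs] by simp
  ultimately show ?case by (meson opcong.trans)
qed

lemma norm: "\<exists>gs. opcong t (rcomb gs)"
proof (induction t)
  case Leaf
  have "opcong Leaf (rcomb [])" by (simp add: opcong.refl)
  then show ?case by blast
next
  case (Node g l r)
  obtain ls rs where "opcong l (rcomb ls)" "opcong r (rcomb rs)" using Node by blast
  then have "opcong (Node g l r) (Node g (rcomb ls) (rcomb rs))"
    by (meson congL congR opcong.trans)
  then show ?case using norm_node by (meson opcong.trans)
qed

lemma inj_add3: "inj_on (\<lambda>b. (k + b) mod 3) {0,1,2::nat}"
proof -
  have r: "k mod 3 \<in> {0,1,2}" by (rule mod3_set)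
  have "inj_on (\<lambda>b. (k mod 3 + b) mod 3) {0,1,2::nat}" using r unfolding inj_on_def by auto
  then show ?thesis by (simp add: mod_add_left_eq)
qed

lemma arity_rcomb: "arity (rcomb gs) = Suc (length gs)"
  by (induction gs) auto

lemma gv_inj: "gv g = gv h \<Longrightarrow> g = h"
  by (cases g; cases h) auto

lemma rcomb_inj: "phi (rcomb gs) = phi (rcomb hs) \<Longrightarrow> gs = hs"
proof (induction gs arbitrary: hs)
  case Nil
  then have "length hs = 0" using phi_W[of "rcomb hs"] phi_W[of "rcomb []"] arity_rcomb by simp
  then show ?case by simp
next
  case (Cons g gs)
  then have "length (phi (rcomb hs)) = length (phi (rcomb (g#gs)))" by simp
  then have "length hs = Suc (length gs)"
    using phi_W[of "rcomb hs"] phi_W[of "rcomb (g#gs)"] arity_rcomb by simp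
  then obtain h hs' where hs: "hs = h # hs'" by (cases hs) auto
  let ?P = "phi (rcomb gs)" and ?Q = "phi (rcomb hs')"
  have eq: "map (\<lambda>b. (gv g + b) mod 3) ?P = map (\<lambda>b. (gv h + b) mod 3) ?Q"
    using Cons.prems hs by simp
  have P: "?P \<noteq> []" "hd ?P = 0" "set ?P \<subseteq> {0,1,2}" using phi_W by blast+
  have Q: "?Q \<noteq> []" "hd ?Q = 0" "set ?Q \<subseteq> {0,1,2}" using phi_W by blast+
  have "hd (map (\<lambda>b. (gv g + b) mod 3) ?P) = hd (map (\<lambda>b. (gv h + b) mod 3) ?Q)"
    using eq by simp
  then have "gv g mod 3 = gv h mod 3" using P Q by (simp add: hd_map)
  then have gh: "g = h" using gv_inj by (cases g; cases h) auto
  have "?P = ?Q"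
  proof (rule map_inj_on)
    show "map (\<lambda>b. (gv g + b) mod 3) ?P = map (\<lambda>b. (gv g + b) mod 3) ?Q" using eq gh by simp
    show "inj_on (\<lambda>b. (gv g + b) mod 3) (set ?P \<union> set ?Q)"
      using inj_add3 P Q by (meson inj_on_subset Un_least)
  qed
  then show ?case using Cons.IH gh hs by simp
qed

lemma part3: "presents_SComp phi"
  unfolding presents_SComp_def
proof (intro conjI allI impI)
  fix t show "phi t \<in> SComp" using phi_W SComp_eq by blast
  show "length (phi t) = arity t" using phi_W by blast
next
  show "phi Leaf = [0]" by simp
next
  fix s t i assume "1 \<le> i \<and> i \<le> arity s"
  then show "phi (graft s i t) = wcomp (phi s) i (phi t)" using phi_graft by blast
next
  show "SComp \<subseteq> range phi" using phi_range by blast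
next
  fix s t
  show "(phi s = phi t) = opcong s t"
  proof
    assume e: "phi s = phi t"
    obtain gs hs where a: "opcong s (rcomb gs)" and b: "opcong t (rcomb hs)" using norm by blast
    have "phi (rcomb gs) = phi (rcomb hs)" using e opcong_phi[OF a] opcong_phi[OF b] by simp
    then have "gs = hs" by (rule rcomb_inj)
    then show "opcong s t" using a b by (meson opcong.sym opcong.trans)
  qed (rule opcong_phi)
qed

theorem mainTheorem8:
  shows "SComp = {x. x \<noteq> [] \<and> set x \<subseteq> {0, 1, 2} \<and> hd x = 0}
     \<and> (\<forall>n \<ge> 1. \<exists>f. bij_betw f {x \<in> SComp. length x = n} (segcomp n))
     \<and> (\<exists>phi. presents_SComp phi)"
  using SComp_eq part2 part3 by blast

end
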